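(* There exists a nontotal pca $\mathcal{A}$ (i.e. $ab$ is undefined for some $a,b\in\mathcal{A}$) in which $0$ and $1$ are not separable.
   Context: A pca is a set $\mathcal{A}$ with partial binary application containing $k,s$ with $kab=a$, $sab\downarrow$, $sabc\simeq ac(bc)$. With $i=skk$, $\mathsf{false}=ki$, $\langle a,b\rangle=\lambda^*z.zab$ ($\lambda^*$ standard combinatory abstraction), $0=\bar 0=i$, $\overline{n+1}=\langle\mathsf{false},\bar n\rangle$, $1=\bar 1$. $0,1$ are separable in $\mathcal{A}$ if there is a total $c\in\mathcal{A}$ with $ca\in\{0,1\}$ for all $a$ such that $ca=0\Rightarrow a\neq 1$ and $ca=1\Rightarrow a\neq 0$. *)

theory Defs
  imports Main
begin

text \<open>A partial applicative structure on a carrier A (inside an ambient type 'a):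
  app a b = None means that a b is undefined.\<close>

definition pap :: "('a \<Rightarrow> 'a \<Rightarrow> 'a option) \<Rightarrow> 'a option \<Rightarrow> 'a option \<Rightarrow> 'a option" where
  "pap app ma mb = (case ma of None \<Rightarrow> None | Some a \<Rightarrow>
                      (case mb of None \<Rightarrow> None | Some b \<Rightarrow> app a b))"

definition pca :: "'a set \<Rightarrow> ('a \<Rightarrow> 'a \<Rightarrow> 'a option) \<Rightarrow> 'a \<Rightarrow> 'a \<Rightarrow> bool" where
  "pca A app k s \<longleftrightarrow>
     k \<in> A \<and> s \<in> A \<and>
     (\<forall>a\<in>A. \<forall>b\<in>A. \<forall>c. app a b = Some c \<longrightarrow> c \<in> A) \<and>
     (\<forall>a\<in>A. \<forall>b\<in>A. pap app (app k a) (Some b) = Some a) \<and>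
     (\<forall>a\<in>A. \<forall>b\<in>A. pap app (app s a) (Some b) \<noteq> None) \<and>
     (\<forall>a\<in>A. \<forall>b\<in>A. \<forall>c\<in>A.
        pap app (pap app (app s a) (Some b)) (Some c)
          = pap app (app a c) (app b c))"

text \<open>Combinators: i = skk, false = ki, and pairing
  <a,b> = lambda* z. z a b = s (s i (k a)) (k b) (standard combinatory abstraction).\<close>

definition comb_i :: "('a \<Rightarrow> 'a \<Rightarrow> 'a option) \<Rightarrow> 'a \<Rightarrow> 'a \<Rightarrow> 'a option" where
  "comb_i app k s = pap app (app s k) (Some k)"

definition comb_false :: "('a \<Rightarrow> 'a \<Rightarrow> 'a option) \<Rightarrow> 'a \<Rightarrow> 'a \<Rightarrow> 'a option" where
  "comb_false app k s = pap app (Some k) (comb_i app k s)"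

definition comb_pair :: "('a \<Rightarrow> 'a \<Rightarrow> 'a option) \<Rightarrow> 'a \<Rightarrow> 'a \<Rightarrow> 'a option \<Rightarrow> 'a option \<Rightarrow> 'a option" where
  "comb_pair app k s ma mb =
     pap app (pap app (Some s)
                (pap app (pap app (Some s) (comb_i app k s)) (pap app (Some k) ma)))
             (pap app (Some k) mb)"

fun numeral_pca :: "('a \<Rightarrow> 'a \<Rightarrow> 'a option) \<Rightarrow> 'a \<Rightarrow> 'a \<Rightarrow> nat \<Rightarrow> 'a option" where
  "numeral_pca app k s 0 = comb_i app k s"
| "numeral_pca app k s (Suc n) = comb_pair app k s (comb_false app k s) (numeral_pca app k s n)"

definition zero_pca :: "('a \<Rightarrow> 'a \<Rightarrow> 'a option) \<Rightarrow> 'a \<Rightarrow> 'a \<Rightarrow> 'a" where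
  "zero_pca app k s = the (numeral_pca app k s 0)"

definition one_pca :: "('a \<Rightarrow> 'a \<Rightarrow> 'a option) \<Rightarrow> 'a \<Rightarrow> 'a \<Rightarrow> 'a" where
  "one_pca app k s = the (numeral_pca app k s 1)"

definition separable01 :: "'a set \<Rightarrow> ('a \<Rightarrow> 'a \<Rightarrow> 'a option) \<Rightarrow> 'a \<Rightarrow> 'a \<Rightarrow> bool" where
  "separable01 A app k s \<longleftrightarrow>
     (\<exists>c\<in>A. (\<forall>a\<in>A. app c a \<noteq> None) \<and>
        (\<forall>a\<in>A. app c a = Some (zero_pca app k s) \<or> app c a = Some (one_pca app k s)) \<and>
        (\<forall>a\<in>A. app c a = Some (zero_pca app k s) \<longrightarrow> a \<noteq> one_pca app k s) \<and>
        (\<forall>a\<in>A. app c a = Some (one_pca app k s) \<longrightarrow> a \<noteq> zero_pca app k s))"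

definition nontotal :: "'a set \<Rightarrow> ('a \<Rightarrow> 'a \<Rightarrow> 'a option) \<Rightarrow> bool" where
  "nontotal A app \<longleftrightarrow> (\<exists>a\<in>A. \<exists>b\<in>A. app a b = None)"

end

theory Submission
  imports Defs "HOL-Library.Countable"
begin

datatype tm = K | S | P nat | Ap tm tm

instance tm :: countable by countable_datatype

inductive isv :: "tm \<Rightarrow> bool" where
  "isv K" | "isv S" | "isv (P n)" | "isv a \<Longrightarrow> isv (Ap K a)" | "isv a \<Longrightarrow> isv (Ap S a)"
| "isv a \<Longrightarrow> isv b \<Longrightarrow> isv (Ap (Ap S a) b)"

inductive ev :: "tm \<Rightarrow> tm \<Rightarrow> bool" and ap :: "tm \<Rightarrow> tm \<Rightarrow> tm \<Rightarrow> bool" where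
  evK: "ev K K"
| evS: "ev S S"
| evP: "ev (P n) (P n)"
| evA: "ev t1 v1 \<Longrightarrow> ev t2 v2 \<Longrightarrow> ap v1 v2 v \<Longrightarrow> ev (Ap t1 t2) v"
| apK: "ap K a (Ap K a)"
| apK2: "ap (Ap K a) b a"
| apS: "ap S a (Ap S a)"
| apS1: "ap (Ap S a) b (Ap (Ap S a) b)"
| apS2: "ev (Ap (Ap a c) (Ap b c)) v \<Longrightarrow> ap (Ap (Ap S a) b) c v"

inductive_cases evAE: "ev (Ap t1 t2) v"
inductive_cases evKE: "ev K v"
inductive_cases evSE: "ev S v"
inductive_cases evPE: "ev (P n) v"
inductive_cases apE: "ap a b v"
inductive_cases apKE: "ap K a v"
inductive_cases apK2E: "ap (Ap K a) b v"
inductive_cases apSE: "ap S a v"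
inductive_cases apS1E: "ap (Ap S a) b v"
inductive_cases apS2E: "ap (Ap (Ap S a) b) c v"
inductive_cases isvKE: "isv (Ap K a)"
inductive_cases isvSE: "isv (Ap S a)"
inductive_cases isvS2E: "isv (Ap (Ap S a) b)"

lemma det: "ev t v1 \<Longrightarrow> (\<forall>v2. ev t v2 \<longrightarrow> v1 = v2)" "ap a b w1 \<Longrightarrow> (\<forall>w2. ap a b w2 \<longrightarrow> w1 = w2)"
proof (induction rule: ev_ap.inducts)
  case (evA t1 v1 t2 v2 v)
  then show ?case by (metis evAE)
next
  case (apS2 a c b v)
  then show ?case by (metis apS2E)
next
  case (apK a) then show ?case by (metis apKE)
next
  case (apK2 a b) then show ?case by (metis apK2E)
next
  case (apS a) then show ?case by (metis apSE)
next
  case (apS1 a b) then show ?case by (metis apS1E)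
qed (metis evKE evSE evPE)+

lemma ev_det: "ev t v1 \<Longrightarrow> ev t v2 \<Longrightarrow> v1 = v2" using det by blast
lemma ap_det: "ap a b v1 \<Longrightarrow> ap a b v2 \<Longrightarrow> v1 = v2" using det by blast

lemma isv_res: "ev t v \<Longrightarrow> isv v" "ap a b w \<Longrightarrow> isv a \<longrightarrow> isv b \<longrightarrow> isv w"
proof (induction rule: ev_ap.inducts)
  case (apK2 a b) then show ?case by (metis isvKE)
next
  case (apS1 a b) then show ?case by (metis isvSE isv.intros(6))
qed (auto intro: isv.intros)

lemma ev_isv: "ev t v \<Longrightarrow> isv v" using isv_res by blast
lemma ap_isv: "ap a b w \<Longrightarrow> isv a \<Longrightarrow> isv b \<Longrightarrow> isv w" using isv_res by blast

lemma isv_ev: "isv v \<Longrightarrow> ev v v"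
  by (induction rule: isv.induct) (auto intro: ev_ap.intros)

lemma ev_ap_val: "isv a \<Longrightarrow> isv c \<Longrightarrow> ev (Ap a c) v \<longleftrightarrow> ap a c v"
  by (metis evAE evA isv_ev ev_det)

fun sub :: "nat \<Rightarrow> tm \<Rightarrow> tm \<Rightarrow> tm" where
  "sub n w K = K" | "sub n w S = S" | "sub n w (P m) = (if m = n then w else P m)"
| "sub n w (Ap a b) = Ap (sub n w a) (sub n w b)"

fun atoms :: "tm \<Rightarrow> nat set" where
  "atoms K = {}" | "atoms S = {}" | "atoms (P m) = {m}" | "atoms (Ap a b) = atoms a \<union> atoms b"

lemma finite_atoms: "finite (atoms t)" by (induction t) auto

lemma sub_fresh: "n \<notin> atoms t \<Longrightarrow> sub n w t = t" by (induction t) auto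

lemma sub_lem: "ev t v \<Longrightarrow> isv w \<longrightarrow> ev (sub n w t) (sub n w v)" "ap a b u \<Longrightarrow> isv w \<longrightarrow> ap (sub n w a) (sub n w b) (sub n w u)"
  by (induction rule: ev_ap.inducts) (auto intro: ev_ap.intros isv_ev)

definition capp :: "tm \<Rightarrow> tm \<Rightarrow> tm option" where
  "capp a b = (if \<exists>v. ap a b v then Some (THE v. ap a b v) else None)"

lemma capp_Some: "ap a b v \<Longrightarrow> capp a b = Some v"
  unfolding capp_def by (auto intro: the_equality ap_det)

lemma capp_SomeD: "capp a b = Some v \<Longrightarrow> ap a b v"
  unfolding capp_def by (auto split: if_splits intro: theI ap_det)

lemma capp_None: "capp a b = None \<longleftrightarrow> (\<forall>v. \<not> ap a b v)"
  unfolding capp_def by auto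

lemma capp_K [simp]: "capp K a = Some (Ap K a)" by (rule capp_Some) (rule apK)
lemma capp_K2 [simp]: "capp (Ap K a) b = Some a" by (rule capp_Some) (rule apK2)
lemma capp_S [simp]: "capp S a = Some (Ap S a)" by (rule capp_Some) (rule apS)
lemma capp_S1 [simp]: "capp (Ap S a) b = Some (Ap (Ap S a) b)" by (rule capp_Some) (rule apS1)

lemma capp_S2:
  assumes "isv a" "isv b" "isv c"
  shows "capp (Ap (Ap S a) b) c = pap capp (capp a c) (capp b c)"
proof -
  have eq: "ap (Ap (Ap S a) b) c v \<longleftrightarrow> (\<exists>v1 v2. ap a c v1 \<and> ap b c v2 \<and> ap v1 v2 v)" for v
  proof
    assume "ap (Ap (Ap S a) b) c v"
    then have "ev (Ap (Ap a c) (Ap b c)) v" by (auto elim: apE)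
    then obtain v1 v2 where "ev (Ap a c) v1" "ev (Ap b c) v2" "ap v1 v2 v" by (auto elim: evAE)
    then show "\<exists>v1 v2. ap a c v1 \<and> ap b c v2 \<and> ap v1 v2 v" using ev_ap_val assms by blast
  next
    assume "\<exists>v1 v2. ap a c v1 \<and> ap b c v2 \<and> ap v1 v2 v"
    then obtain v1 v2 where "ap a c v1" "ap b c v2" "ap v1 v2 v" by blast
    then have "ev (Ap (Ap a c) (Ap b c)) v" using ev_ap_val assms evA by blast
    then show "ap (Ap (Ap S a) b) c v" by (rule apS2)
  qed
  show ?thesis
  proof (cases "capp (Ap (Ap S a) b) c")
    case None
    then have nv: "\<not> ap (Ap (Ap S a) b) c v" for v using capp_None by blast
    show ?thesis
    proof (cases "capp a c")
      case (Some v1) note s1 = this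
      show ?thesis
      proof (cases "capp b c")
        case (Some v2)
        have "capp v1 v2 = None" unfolding capp_None
          using nv eq capp_SomeD[OF s1] capp_SomeD[OF Some] by blast
        then show ?thesis using None s1 Some by (simp add: pap_def)
      qed (simp add: None pap_def s1)
    qed (simp add: None pap_def)
  next
    case (Some v)
    then have "ap (Ap (Ap S a) b) c v" by (rule capp_SomeD)
    then obtain v1 v2 where "ap a c v1" "ap b c v2" "ap v1 v2 v" using eq by blast
    then show ?thesis using Some by (simp add: pap_def capp_Some)
  qed
qed

definition napp :: "nat \<Rightarrow> nat \<Rightarrow> nat option" where
  "napp m n = map_option to_nat (capp (from_nat m) (from_nat n))"

definition NA :: "nat set" where "NA = to_nat ` Collect isv"

lemma napp_to_nat [simp]: "napp (to_nat a) (to_nat b) = map_option to_nat (capp a b)"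
  by (simp add: napp_def)

lemma pap_transfer: "pap napp (map_option to_nat x) (map_option to_nat y) = map_option to_nat (pap capp x y)"
  by (auto simp: pap_def split: option.splits)

lemma pap_Some: "pap f (Some a) (Some b) = f a b" by (simp add: pap_def)

lemma pca_NA: "pca NA napp (to_nat K) (to_nat S)"
  unfolding pca_def NA_def
proof (intro conjI ballI allI impI)
  show "to_nat K \<in> to_nat ` Collect isv" by (auto intro: isv.intros)
  show "to_nat S \<in> to_nat ` Collect isv" by (auto intro: isv.intros)
next
  fix a b c assume "a \<in> to_nat ` Collect isv" "b \<in> to_nat ` Collect isv" "napp a b = Some c"
  then obtain x y z where "a = to_nat x" "b = to_nat y" "isv x" "isv y" "c = to_nat z" "ap x y z"
    by (auto dest!: capp_SomeD)
  then show "c \<in> to_nat ` Collect isv" using ap_isv by blast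
next
  fix a b assume "a \<in> to_nat ` Collect isv" "b \<in> to_nat ` Collect isv"
  then show "pap napp (napp (to_nat K) a) (Some b) = Some a" by (auto simp: pap_Some)
next
  fix a b assume "a \<in> to_nat ` Collect isv" "b \<in> to_nat ` Collect isv"
  then show "pap napp (napp (to_nat S) a) (Some b) \<noteq> None" by (auto simp: pap_Some)
next
  fix a b c assume "a \<in> to_nat ` Collect isv" "b \<in> to_nat ` Collect isv" "c \<in> to_nat ` Collect isv"
  then obtain a' b' c' where ab: "a = to_nat a'" "b = to_nat b'" "c = to_nat c'" "isv a'" "isv b'" "isv c'" by auto
  have "pap napp (napp a c) (napp b c) = map_option to_nat (pap capp (capp a' c') (capp b' c'))"
    using ab by (simp add: pap_transfer)
  also have "\<dots> = map_option to_nat (capp (Ap (Ap S a') b') c')" using capp_S2 ab by simp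
  finally show "pap napp (pap napp (napp (to_nat S) a) (Some b)) (Some c) = pap napp (napp a c) (napp b c)"
    using ab by (simp add: pap_Some)
qed

definition "I0 = Ap (Ap S K) K"
definition "O1 = Ap (Ap S (Ap (Ap S I0) (Ap K (Ap K I0)))) (Ap K I0)"

lemma zero_eq: "zero_pca napp (to_nat K) (to_nat S) = to_nat I0"
  by (simp add: zero_pca_def comb_i_def pap_Some I0_def)

lemma one_eq: "one_pca napp (to_nat K) (to_nat S) = to_nat O1"
  by (simp add: one_pca_def comb_i_def comb_false_def comb_pair_def pap_Some I0_def O1_def)

lemma I0_O1: "I0 \<noteq> O1" by (simp add: I0_def O1_def)

lemma atoms_I0: "atoms I0 = {}" and atoms_O1: "atoms O1 = {}"
  by (simp_all add: I0_def O1_def)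

lemma isv_I0: "isv I0" and isv_O1: "isv O1"
  by (auto simp: I0_def O1_def intro!: isv.intros)

lemma not_sep: "\<not> separable01 NA napp (to_nat K) (to_nat S)"
proof
  assume "separable01 NA napp (to_nat K) (to_nat S)"
  then obtain c where cA: "c \<in> NA" and tot: "\<forall>a\<in>NA. napp c a \<noteq> None"
    and vals: "\<forall>a\<in>NA. napp c a = Some (to_nat I0) \<or> napp c a = Some (to_nat O1)"
    and s0: "\<forall>a\<in>NA. napp c a = Some (to_nat I0) \<longrightarrow> a \<noteq> to_nat O1"
    and s1: "\<forall>a\<in>NA. napp c a = Some (to_nat O1) \<longrightarrow> a \<noteq> to_nat I0"
    unfolding separable01_def zero_eq one_eq by blast
  from cA obtain ct where ct: "c = to_nat ct" "isv ct" unfolding NA_def by auto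
  obtain n where n: "n \<notin> atoms ct" using finite_atoms infinite_UNIV_nat ex_new_if_finite by blast
  have PA: "to_nat (P n) \<in> NA" unfolding NA_def by (auto intro: isv.intros)
  have I0A: "to_nat I0 \<in> NA" and O1A: "to_nat O1 \<in> NA" unfolding NA_def using isv_I0 isv_O1 by auto
  from vals PA ct have "capp ct (P n) = Some I0 \<or> capp ct (P n) = Some O1" by auto
  then obtain v where v: "ap ct (P n) v" "v = I0 \<or> v = O1" by (auto dest: capp_SomeD)
  have sv: "sub n w v = v" for w using v(2) sub_fresh atoms_I0 atoms_O1 by auto
  have "ap (sub n I0 ct) (sub n I0 (P n)) (sub n I0 v)" using sub_lem(2) isv_I0 v(1) by blast
  then have a0: "ap ct I0 v" using sv sub_fresh[OF n] by simp
  have "ap (sub n O1 ct) (sub n O1 (P n)) (sub n O1 v)" using sub_lem(2) isv_O1 v(1) by blast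
  then have a1: "ap ct O1 v" using sv sub_fresh[OF n] by simp
  have "napp c (to_nat I0) = Some (to_nat v)" "napp c (to_nat O1) = Some (to_nat v)"
    using a0 a1 ct by (simp_all add: capp_Some)
  then show False using v(2) s0 s1 I0A O1A by auto
qed

theorem mainTheorem13:
  shows "\<exists>(A :: nat set) app k s. pca A app k s \<and> nontotal A app \<and> \<not> separable01 A app k s"
proof (intro exI conjI)
  show "pca NA napp (to_nat K) (to_nat S)" by (rule pca_NA)
  show "\<not> separable01 NA napp (to_nat K) (to_nat S)" by (rule not_sep)
  show "nontotal NA napp" unfolding nontotal_def NA_def
  proof (intro bexI)
    show "napp (to_nat (P 0)) (to_nat K) = None" by (auto simp: capp_None elim: apE)
  qed (auto intro: isv.intros)
qed

end
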